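(* Let $L_1,L_2,L_3$ be pairwise commuting generators of semigroups of completely positive unital maps on $M_d$, let $x_1,x_2,x_3\ge0$ with $x_1+x_2+x_3=1$, and let $A_t=\sum_{j=1}^3x_je^{tL_j}$. Then $A_t$ solves $\frac{dA_t}{dt}=\int_0^t ds\,L_{t-s}A_s$, $A_0=I$, with memory kernel whose Laplace transform is $$\widehat L_p=L+\widehat B_p\,\widehat C_p^{-1},$$ where $L=x_1L_1+x_2L_2+x_3L_3$, $\widehat B_p=p\,(x_1L_1^2+x_2L_2^2+x_3L_3^2-L^2)+L_1L_2L_3-L(x_1L_2L_3+x_2L_1L_3+x_3L_1L_2)$, $\widehat C_p=p^2I-p(L_1+L_2+L_3-L)+x_1L_2L_3+x_2L_1L_3+x_3L_1L_2$ (for $p$ large enough that $\widehat C_p$ is invertible).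
   Context: $M_d$ denotes the algebra of complex $d\times d$ matrices; $I$ is the identity map on $M_d$. For a $\mathcal B(M_d)$-valued function $X_t$, $\widehat X_p=\int_0^\infty dt\,e^{-pt}X_t$ is its Laplace transform; the master equation means $\widehat A_p=(pI-\widehat L_p)^{-1}$. *)

theory Defs
  imports "HOL-Analysis.Analysis"
begin

text \<open>Elements of M_d are complex d x d matrices (type complex^'d^'d); linear maps on
  M_d are bounded (real-)linear operators, required additionally to be complex-linear.\<close>

type_synonym 'd sop = "(complex^'d^'d) \<Rightarrow>\<^sub>L (complex^'d^'d)"

definition cscale :: "complex \<Rightarrow> complex^'d^'d \<Rightarrow> complex^'d^'d" where
  "cscale c X = (\<chi> i j. c * X $ i $ j)"

definition complex_linear_op :: "'d::finite sop \<Rightarrow> bool" where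
  "complex_linear_op T \<longleftrightarrow>
     (\<forall>c X. blinfun_apply T (cscale c X) = cscale c (blinfun_apply T X))"

primrec op_pow :: "'d::finite sop \<Rightarrow> nat \<Rightarrow> 'd sop" where
  "op_pow T 0 = id_blinfun"
| "op_pow T (Suc n) = T o\<^sub>L op_pow T n"

definition op_exp :: "'d::finite sop \<Rightarrow> 'd sop" where
  "op_exp T = (\<Sum>n. (1 / fact n) *\<^sub>R op_pow T n)"

definition op_invertible :: "'d::finite sop \<Rightarrow> bool" where
  "op_invertible T \<longleftrightarrow> (\<exists>S. T o\<^sub>L S = id_blinfun \<and> S o\<^sub>L T = id_blinfun)"

definition op_inv :: "'d::finite sop \<Rightarrow> 'd sop" where
  "op_inv T = (SOME S. T o\<^sub>L S = id_blinfun \<and> S o\<^sub>L T = id_blinfun)"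

text \<open>Positivity of an n x n block matrix with blocks in M_d (i.e. an element of
  M_n(M_d) = M_{nd}): its quadratic form is real and nonnegative.\<close>
definition psd_block :: "nat \<Rightarrow> (nat \<Rightarrow> nat \<Rightarrow> complex^'d::finite^'d) \<Rightarrow> bool" where
  "psd_block n X \<longleftrightarrow>
     (\<forall>v :: nat \<Rightarrow> complex^'d.
        let s = (\<Sum>a<n. \<Sum>b<n. \<Sum>i\<in>UNIV. cnj (v a $ i) * ((X a b *v v b) $ i))
        in Im s = 0 \<and> Re s \<ge> 0)"

text \<open>Complete positivity: id_n \<otimes> T is positive on M_n(M_d) for every n.\<close>
definition completely_positive :: "'d::finite sop \<Rightarrow> bool" where
  "completely_positive T \<longleftrightarrow>
     (\<forall>n X. psd_block n X \<longrightarrow> psd_block n (\<lambda>a b. blinfun_apply T (X a b)))"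

definition unital :: "'d::finite sop \<Rightarrow> bool" where
  "unital T \<longleftrightarrow> blinfun_apply T (mat 1) = mat 1"

definition cpu_generator :: "'d::finite sop \<Rightarrow> bool" where
  "cpu_generator L \<longleftrightarrow> complex_linear_op L \<and>
     (\<forall>t\<ge>0. completely_positive (op_exp (t *\<^sub>R L)) \<and> unital (op_exp (t *\<^sub>R L)))"

end

theory Submission
  imports Defs "HOL-Real_Asymp.Real_Asymp"
begin


typedef (overloaded) 'a endo = "UNIV :: ('a::euclidean_space \<Rightarrow>\<^sub>L 'a) set"
  morphisms fromE toE by auto

setup_lifting type_definition_endo

instantiation endo :: (euclidean_space) real_normed_algebra_1
begin
lift_definition zero_endo :: "'a endo" is 0 .
lift_definition one_endo :: "'a endo" is id_blinfun .
lift_definition plus_endo :: "'a endo \<Rightarrow> 'a endo \<Rightarrow> 'a endo" is "(+)" .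
lift_definition minus_endo :: "'a endo \<Rightarrow> 'a endo \<Rightarrow> 'a endo" is "(-)" .
lift_definition uminus_endo :: "'a endo \<Rightarrow> 'a endo" is "uminus" .
lift_definition times_endo :: "'a endo \<Rightarrow> 'a endo \<Rightarrow> 'a endo" is "(o\<^sub>L)" .
lift_definition scaleR_endo :: "real \<Rightarrow> 'a endo \<Rightarrow> 'a endo" is "scaleR" .
lift_definition norm_endo :: "'a endo \<Rightarrow> real" is norm .
definition dist_endo :: "'a endo \<Rightarrow> 'a endo \<Rightarrow> real"
  where "dist_endo a b = norm (a - b)"
definition [code del]:
  "(uniformity :: ('a endo \<times> 'a endo) filter) = (INF e\<in>{0 <..}. principal {(x, y). dist x y < e})"
definition open_endo :: "'a endo set \<Rightarrow> bool"
  where [code del]: "open_endo S = (\<forall>x\<in>S. \<forall>\<^sub>F (x', y) in uniformity. x' = x \<longrightarrow> y \<in> S)"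
definition sgn_endo :: "'a endo \<Rightarrow> 'a endo"
  where "sgn_endo x = scaleR (inverse (norm x)) x"
instance
proof
  fix a b c :: "'a endo" and r s :: real
  show "a + b + c = a + (b + c)" by transfer simp
  show "a + b = b + a" by transfer simp
  show "0 + a = a" by transfer simp
  show "- a + a = 0" by transfer simp
  show "a - b = a + - b" by transfer simp
  show "r *\<^sub>R (a + b) = r *\<^sub>R a + r *\<^sub>R b" by transfer (simp add: scaleR_add_right)
  show "(r + s) *\<^sub>R a = r *\<^sub>R a + s *\<^sub>R a" by transfer (simp add: scaleR_add_left)
  show "r *\<^sub>R s *\<^sub>R a = (r * s) *\<^sub>R a" by transfer simp
  show "1 *\<^sub>R a = a" by transfer simp
  show "a * b * c = a * (b * c)" by transfer (auto intro!: blinfun_eqI)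
  show "(a + b) * c = a * c + b * c" by transfer (auto intro!: blinfun_eqI simp: blinfun.bilinear_simps)
  show "a * (b + c) = a * b + a * c" by transfer (auto intro!: blinfun_eqI simp: blinfun.bilinear_simps)
  show "1 * a = a" by transfer (auto intro!: blinfun_eqI)
  show "a * 1 = a" by transfer (auto intro!: blinfun_eqI)
  show "r *\<^sub>R a * b = r *\<^sub>R (a * b)" by transfer (auto intro!: blinfun_eqI simp: blinfun.bilinear_simps)
  show "a * r *\<^sub>R b = r *\<^sub>R (a * b)" by transfer (auto intro!: blinfun_eqI simp: blinfun.bilinear_simps)
  show "(norm a = 0) = (a = 0)" by transfer simp
  show "norm (a + b) \<le> norm a + norm b" by transfer (rule norm_triangle_ineq)
  show "norm (r *\<^sub>R a) = \<bar>r\<bar> * norm a" by transfer simp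
  show "norm (a * b) \<le> norm a * norm b" by transfer (rule norm_blinfun_compose)
  show "norm (1::'a endo) = 1" by transfer simp
  show "(0::'a endo) \<noteq> 1" proof transfer
    show "(0::'a \<Rightarrow>\<^sub>L 'a) \<noteq> id_blinfun"
    proof
      assume h: "(0::'a \<Rightarrow>\<^sub>L 'a) = id_blinfun"
      have "norm (0::'a \<Rightarrow>\<^sub>L 'a) = 1" by (subst h) simp
      then show False by simp
    qed
  qed
qed (simp_all add: dist_endo_def open_endo_def sgn_endo_def uniformity_endo_def)
end


lemma fromE_add: "fromE (a + b) = fromE a + fromE b" by transfer simp
lemma fromE_diff: "fromE (a - b) = fromE a - fromE b" by transfer simp
lemma fromE_minus: "fromE (- a) = - fromE a" by transfer simp
lemma fromE_scaleR: "fromE (r *\<^sub>R a) = r *\<^sub>R fromE a" by transfer simp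
lemma fromE_mult: "fromE (a * b) = fromE a o\<^sub>L fromE b" by transfer simp
lemma fromE_one: "fromE 1 = id_blinfun" by transfer simp
lemma fromE_zero: "fromE 0 = 0" by transfer simp
lemma norm_fromE: "norm (fromE a) = norm a" by transfer simp
lemma fromE_toE[simp]: "fromE (toE x) = x" by (simp add: toE_inverse)
lemma toE_fromE[simp]: "toE (fromE x) = x" by (rule fromE_inverse)
lemma fromE_inj: "fromE a = fromE b \<longleftrightarrow> a = b" by (metis toE_fromE)

lemma bounded_linear_fromE: "bounded_linear fromE"
  by (rule bounded_linear_intro[where K=1]) (auto simp: fromE_add fromE_scaleR norm_fromE)

lemma dist_fromE: "dist (fromE a) (fromE b) = dist a b"
  by (simp add: dist_norm fromE_diff[symmetric] norm_fromE)

lemma tendsto_fromE_iff: "((\<lambda>n. fromE (f n)) \<longlongrightarrow> fromE l) F \<longleftrightarrow> (f \<longlongrightarrow> l) F"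
  by (simp add: tendsto_iff dist_fromE)

instance endo :: (euclidean_space) banach
proof
  fix X :: "nat \<Rightarrow> 'a endo" assume "Cauchy X"
  then have "Cauchy (\<lambda>n. fromE (X n))" by (simp add: Cauchy_def dist_fromE)
  then obtain l where "(\<lambda>n. fromE (X n)) \<longlonglongrightarrow> l" using convergent_def Cauchy_convergent_iff by blast
  then have "(\<lambda>n. fromE (X n)) \<longlonglongrightarrow> fromE (toE l)" by simp
  then have "X \<longlonglongrightarrow> toE l" by (simp only: tendsto_fromE_iff)
  then show "convergent X" by (auto simp: convergent_def)
qed

lemma op_pow_eq: "op_pow T n = fromE (toE T ^ n)"
  by (induction n) (simp_all add: fromE_one fromE_mult)

lemma op_exp_eq: "op_exp T = fromE (exp (toE T))"
proof -
  have "op_exp T = (\<Sum>n. fromE (toE T ^ n /\<^sub>R fact n))"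
    unfolding op_exp_def op_pow_eq by (simp add: fromE_scaleR divide_inverse_commute)
  also have "\<dots> = fromE (\<Sum>n. toE T ^ n /\<^sub>R fact n)"
    by (rule bounded_linear.suminf[OF bounded_linear_fromE summable_exp_generic, symmetric])
  finally show ?thesis by (simp add: exp_def)
qed




lemma double_delta:
  fixes c :: "'b::comm_monoid_add"
  assumes "finite A" "finite B" "i \<in> A" "j \<in> B"
  shows "(\<Sum>ia\<in>A. \<Sum>ja\<in>B. if ia = i \<and> ja = j then c else 0) = c"
proof -
  have "\<And>ia. (\<Sum>ja\<in>B. if ia = i \<and> ja = j then c else 0) = (if ia = i then c else 0)"
    using assms by (simp add: sum.delta')
  then show ?thesis using assms by (simp add: sum.delta')
qed

definition Eij :: "'a::euclidean_space \<Rightarrow> 'a \<Rightarrow> 'a \<Rightarrow>\<^sub>L 'a" where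
  "Eij i j = blinfun_of_matrix (\<lambda>i' j'. if i' = i \<and> j' = j then 1 else 0)"

lemma Eij_apply: "i \<in> Basis \<Longrightarrow> j \<in> Basis \<Longrightarrow> blinfun_apply (Eij i j) x = (x \<bullet> j) *\<^sub>R i"
  unfolding Eij_def blinfun_of_matrix_apply
  by (simp add: if_distrib[of "\<lambda>c. (_ * c) *\<^sub>R _"] double_delta cong: if_cong)

lemma matrix_decomp:
  fixes f :: "'a::euclidean_space \<Rightarrow>\<^sub>L 'a"
  shows "f = (\<Sum>i\<in>Basis. \<Sum>j\<in>Basis. (f j \<bullet> i) *\<^sub>R Eij i j)"
proof -
  have "f = blinfun_of_matrix (\<lambda>i j. f j \<bullet> i)" by (simp add: blinfun_of_matrix_works)
  also have "\<dots> = (\<Sum>i\<in>Basis. \<Sum>j\<in>Basis. (f j \<bullet> i) *\<^sub>R Eij i j)"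
    by (rule blinfun_eqI) (simp add: blinfun_of_matrix_apply blinfun.sum_left blinfun.scaleR_left
         Eij_apply algebra_simps cong: sum.cong)
  finally show ?thesis .
qed

lemma blinfun_of_matrix_entry:
  fixes a :: "'a::euclidean_space \<Rightarrow> 'a \<Rightarrow> real"
  assumes "i \<in> Basis" "j \<in> Basis"
  shows "blinfun_of_matrix a j \<bullet> i = a i j"
proof -
  have h: "\<And>ia. (\<Sum>ja\<in>Basis. if ia = i then (if j = ja then 1 else 0) * a i ja else 0) = (if ia = i then a i j else 0)"
    using assms by (simp add: if_distrib[of "\<lambda>c. c * _"] sum.delta cong: if_cong)
  show ?thesis
    using assms by (simp add: blinfun_of_matrix_apply inner_sum_left inner_Basis if_distrib[of "\<lambda>c. _ * c"] h sum.delta' cong: if_cong)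
qed


lemma has_integral_componentwise_blinfun:
  fixes F :: "real \<Rightarrow> 'a::euclidean_space \<Rightarrow>\<^sub>L 'a" and R :: "'a \<Rightarrow>\<^sub>L 'a"
  assumes "\<And>i j. i \<in> Basis \<Longrightarrow> j \<in> Basis \<Longrightarrow> ((\<lambda>t. F t j \<bullet> i) has_integral (R j \<bullet> i)) S"
  shows "(F has_integral R) S"
proof -
  have "((\<lambda>t. \<Sum>i\<in>Basis. \<Sum>j\<in>Basis. (F t j \<bullet> i) *\<^sub>R Eij i j) has_integral
         (\<Sum>i\<in>Basis. \<Sum>j\<in>Basis. (R j \<bullet> i) *\<^sub>R Eij i j)) S"
    by (intro has_integral_sum finite_Basis has_integral_scaleR_left assms)
  then show ?thesis by (simp flip: matrix_decomp)
qed

lemma laplace: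
  fixes k :: "'a::euclidean_space endo" and p :: real
  assumes p: "p > norm k"
  shows "\<exists>R. ((\<lambda>t. exp (- p * t) *\<^sub>R fromE (exp (t *\<^sub>R k))) has_integral fromE R) {0..}
           \<and> (p *\<^sub>R 1 - k) * R = 1 \<and> R * (p *\<^sub>R 1 - k) = 1"
proof -
  define c where "c = p - norm k"
  have c: "c > 0" using p by (simp add: c_def)
  define M where "M = k - p *\<^sub>R 1"
  define e where "e t = exp (t *\<^sub>R M)" for t :: real
  have e_eq: "e t = exp (-p*t) *\<^sub>R exp (t *\<^sub>R k)" for t
  proof -
    have "t *\<^sub>R M = t *\<^sub>R k + of_real (- p * t)"
      by (simp add: M_def scaleR_diff_right of_real_def algebra_simps)
    moreover have "(t *\<^sub>R k) * of_real (- p * t) = of_real (- p * t) * (t *\<^sub>R k)"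
      by (simp add: of_real_def)
    ultimately have "e t = exp (t *\<^sub>R k) * exp (of_real (-p*t))"
      unfolding e_def by (simp only: exp_add_commuting)
    also have "\<dots> = exp (-p*t) *\<^sub>R exp (t *\<^sub>R k)"
      by (subst exp_of_real) (simp add: of_real_def)
    finally show ?thesis .
  qed
  have e_norm: "norm (e t) \<le> exp (- c * t)" if t: "t \<ge> 0" for t
  proof -
    have "norm (e t) = exp (-p*t) * norm (exp (t *\<^sub>R k))" by (simp add: e_eq)
    also have "\<dots> \<le> exp (-p*t) * exp (norm (t *\<^sub>R k))"
      by (intro mult_left_mono norm_exp) auto
    also have "\<dots> = exp (- c * t)" using t by (simp add: c_def algebra_simps flip: exp_add)
    finally show ?thesis .
  qed
  have e0: "e 0 = 1" by (simp add: e_def)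
  have deriv_l: "(e has_vector_derivative M * e t) (at t within X)" for t X
    unfolding e_def by (rule has_vector_derivative_at_within[OF exp_scaleR_has_vector_derivative_left])
  have deriv_r: "(e has_vector_derivative e t * M) (at t within X)" for t X
    unfolding e_def by (rule exp_scaleR_has_vector_derivative_right)
  have cont: "continuous_on X e" for X
    using deriv_l by (meson continuous_on_eq_continuous_within has_vector_derivative_continuous)
  define G where "G b = integral {0..b} e" for b
  have Gint: "(e has_integral G b) {0..b}" for b
    unfolding G_def by (intro integrable_integral integrable_continuous_interval cont)
  have MG: "M * G b = e b - 1" if b: "b \<ge> 0" for b
  proof -
    have "((\<lambda>t. M * e t) has_integral (e b - e 0)) {0..b}"
      using b by (intro fundamental_theorem_of_calculus deriv_l) 
    moreover have "((\<lambda>t. M * e t) has_integral M * G b) {0..b}"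
      by (rule has_integral_mult_right[OF Gint])
    ultimately show ?thesis by (simp add: e0 has_integral_unique)
  qed
  have GM: "G b * M = e b - 1" if b: "b \<ge> 0" for b
  proof -
    have "((\<lambda>t. e t * M) has_integral (e b - e 0)) {0..b}"
      using b by (intro fundamental_theorem_of_calculus deriv_r) 
    moreover have "((\<lambda>t. e t * M) has_integral G b * M) {0..b}"
      by (rule has_integral_mult_left[OF Gint])
    ultimately show ?thesis by (simp add: e0 has_integral_unique)
  qed
  define a where "a i j = integral {0..} (\<lambda>t. fromE (e t) j \<bullet> i)" for i j :: 'a
  have comp: "((\<lambda>t. fromE (e t) j \<bullet> i) has_integral a i j) {0..}
       \<and> (\<lambda>n. fromE (G (real n)) j \<bullet> i) \<longlonglongrightarrow> a i j"
    if ij: "i \<in> Basis" "j \<in> Basis" for i j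
  proof -
    define g where "g t = fromE (e t) j \<bullet> i" for t
    define f where "f n t = (if t \<in> {0..real n} then g t else 0)" for n :: nat and t
    have blh: "bounded_linear (\<lambda>T. fromE T j \<bullet> i)"
      by (intro bounded_linear_inner_left_comp bounded_linear_compose[OF blinfun.bounded_linear_left bounded_linear_fromE])
    have gint: "(g has_integral (fromE (G b) j \<bullet> i)) {0..b}" for b
      using has_integral_linear[OF Gint blh] unfolding g_def by (simp add: o_def)
    have fint: "(f n has_integral (fromE (G (real n)) j \<bullet> i)) {0..}" for n
      unfolding f_def by (subst has_integral_restrict) (auto intro: gint)
    have gbound: "norm (g t) \<le> exp (- c * t)" if "t \<ge> 0" for t
    proof -
      have "norm (g t) \<le> norm (fromE (e t) j) * norm i"
        unfolding g_def real_norm_def by (rule Cauchy_Schwarz_ineq2)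
      also have "\<dots> \<le> norm (fromE (e t)) * norm j * norm i"
        by (intro mult_right_mono norm_blinfun) auto
      also have "\<dots> = norm (e t)" using ij by (simp add: norm_fromE)
      also have "\<dots> \<le> exp (- c * t)" using e_norm that by blast
      finally show ?thesis .
    qed
    have hint: "(\<lambda>t. exp (- c * t)) integrable_on {0..}"
      using has_integral_exp_minus_to_infinity[OF c, of 0] by blast
    have p1: "\<And>n. f n integrable_on {0..}" using fint by blast
    have p3: "\<And>n t. t \<in> {0..} \<Longrightarrow> norm (f n t) \<le> exp (- c * t)"
      using gbound by (auto simp: f_def)
    have p4: "(\<lambda>n. f n t) \<longlonglongrightarrow> g t" if "t \<in> {0..}" for t
    proof -
      have "eventually (\<lambda>n. real n \<ge> t) sequentially"
        by (meson eventually_sequentiallyI nat_ceiling_le_eq)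
      then have "eventually (\<lambda>n. f n t = g t) sequentially"
        by (rule eventually_mono) (use that in \<open>auto simp: f_def\<close>)
      then show ?thesis by (simp add: tendsto_eventually)
    qed
    note dc = dominated_convergence[of f "{0..}" "\<lambda>t. exp (- c * t)" g, OF p1 hint p3 p4]
    have "integral {0..} (f n) = fromE (G (real n)) j \<bullet> i" for n
      using fint by (rule integral_unique)
    then show ?thesis using dc unfolding a_def g_def[symmetric]
      by (auto intro: integrable_integral)
  qed
  define Rs where "Rs = blinfun_of_matrix a"
  have Rs_entry: "Rs j \<bullet> i = a i j" if "i \<in> Basis" "j \<in> Basis" for i j
    unfolding Rs_def using that by (rule blinfun_of_matrix_entry)
  have int_Rs: "((\<lambda>t. fromE (e t)) has_integral Rs) {0..}"
    by (rule has_integral_componentwise_blinfun) (use comp Rs_entry in auto)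
  have "(\<lambda>n. fromE (G (real n))) \<longlonglongrightarrow> Rs"
    by (rule tendsto_componentwise) (use comp Rs_entry in auto)
  define R where "R = toE Rs"
  have GR: "(\<lambda>n. G (real n)) \<longlonglongrightarrow> R"
    using \<open>(\<lambda>n. fromE (G (real n))) \<longlonglongrightarrow> Rs\<close> unfolding R_def
    by (simp flip: tendsto_fromE_iff)
  have e_lim: "(\<lambda>n. e (real n)) \<longlonglongrightarrow> 0"
  proof (rule Lim_null_comparison)
    show "\<forall>\<^sub>F n in sequentially. norm (e (real n)) \<le> exp (- c * real n)"
      using e_norm by auto
    show "(\<lambda>n. exp (- c * real n)) \<longlonglongrightarrow> 0" using c by real_asymp
  qed
  have l1: "(\<lambda>n. M * G (real n)) \<longlonglongrightarrow> M * R" by (intro tendsto_intros GR)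
  have l2: "(\<lambda>n. M * G (real n)) \<longlonglongrightarrow> 0 - 1"
    using tendsto_diff[OF e_lim tendsto_const[of 1]] by (simp add: MG)
  have MR: "M * R = - 1" using LIMSEQ_unique[OF l1 l2] by simp
  have l3: "(\<lambda>n. G (real n) * M) \<longlonglongrightarrow> R * M" by (intro tendsto_intros GR)
  have l4: "(\<lambda>n. G (real n) * M) \<longlonglongrightarrow> 0 - 1"
    using tendsto_diff[OF e_lim tendsto_const[of 1]] by (simp add: GM)
  have RM: "R * M = - 1" using LIMSEQ_unique[OF l3 l4] by simp
  have pk: "p *\<^sub>R 1 - k = - M" by (simp add: M_def)
  have "(\<lambda>t. fromE (e t)) = (\<lambda>t. exp (- p * t) *\<^sub>R fromE (exp (t *\<^sub>R k)))"
    by (simp add: e_eq fromE_scaleR)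
  with int_Rs have "((\<lambda>t. exp (- p * t) *\<^sub>R fromE (exp (t *\<^sub>R k))) has_integral fromE R) {0..}"
    by (simp add: R_def)
  then show ?thesis using MR RM pk by auto
qed




lemma toE_zero: "toE 0 = 0" by (metis fromE_zero toE_fromE)
lemma toE_scaleR: "toE (r *\<^sub>R fromE a) = r *\<^sub>R a" by (metis fromE_scaleR toE_fromE)

lemma comm_inv:
  fixes a b r :: "'a::monoid_mult"
  assumes "a*b = b*a" "b*r = 1" "r*b = 1"
  shows "a*r = r*a"
proof -
  have "a*r = (r*b)*a*r" using assms by simp
  also have "\<dots> = r*(b*a)*r" by (simp add: mult.assoc)
  also have "\<dots> = r*(a*b)*r" using assms by simp
  also have "\<dots> = r*a*(b*r)" by (simp add: mult.assoc)
  also have "\<dots> = r*a" using assms by simp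
  finally show ?thesis .
qed

lemma neumann:
  fixes X :: "'a::{real_normed_algebra_1,banach}"
  assumes X: "norm X < 1"
  shows "\<exists>Y. (1 - X)*Y = 1 \<and> Y*(1-X) = 1"
proof -
  have sm: "summable (\<lambda>n. X^n)"
  proof (rule summable_comparison_test)
    show "\<exists>N. \<forall>n\<ge>N. norm (X^n) \<le> norm X ^ n" by (auto intro: norm_power_ineq)
    show "summable (\<lambda>n. norm X ^ n)" using X by (intro summable_geometric) simp
  qed
  define Y where "Y = suminf (\<lambda>n. X^n)"
  have "(\<lambda>n. X^n) sums Y" unfolding Y_def using sm by (rule summable_sums)
  then have lim: "(\<lambda>n. \<Sum>i<n. X^i) \<longlonglongrightarrow> Y" by (simp add: sums_def)
  have pl: "(1 - X) * (\<Sum>i<n. X^i) = 1 - X^n" for n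
  proof (induction n)
    case (Suc n)
    have "(1 - X) * (\<Sum>i<Suc n. X^i) = (1-X)*(\<Sum>i<n. X^i) + (1-X)*X^n" by (simp add: distrib_left)
    also have "\<dots> = 1 - X^Suc n" using Suc.IH by (simp add: algebra_simps)
    finally show ?case .
  qed simp
  have pr: "(\<Sum>i<n. X^i) * (1 - X) = 1 - X^n" for n
  proof (induction n)
    case (Suc n)
    have "(\<Sum>i<Suc n. X^i) * (1 - X) = (\<Sum>i<n. X^i) * (1-X) + X^n * (1-X)" by (simp add: distrib_right)
    also have "\<dots> = 1 - X^Suc n" using Suc.IH by (simp add: algebra_simps power_commutes)
    finally show ?case .
  qed simp
  have X0: "(\<lambda>n. X^n) \<longlonglongrightarrow> 0"
  proof (rule Lim_null_comparison)
    show "\<forall>\<^sub>F n in sequentially. norm (X^n) \<le> norm X ^ n" by (intro always_eventually allI norm_power_ineq)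
    show "(\<lambda>n. norm X ^ n) \<longlonglongrightarrow> 0" using X by (intro LIMSEQ_power_zero) auto
  qed
  have a1: "(\<lambda>n. (1 - X) * (\<Sum>i<n. X^i)) \<longlonglongrightarrow> (1 - X) * Y" by (intro tendsto_intros lim)
  have a2: "(\<lambda>n. (1 - X) * (\<Sum>i<n. X^i)) \<longlonglongrightarrow> 1 - 0" unfolding pl by (intro tendsto_intros X0)
  have b1: "(\<lambda>n. (\<Sum>i<n. X^i) * (1 - X)) \<longlonglongrightarrow> Y * (1 - X)" by (intro tendsto_intros lim)
  have b2: "(\<lambda>n. (\<Sum>i<n. X^i) * (1 - X)) \<longlonglongrightarrow> 1 - 0" unfolding pr by (intro tendsto_intros X0)
  show ?thesis using LIMSEQ_unique[OF a1 a2] LIMSEQ_unique[OF b1 b2] by auto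
qed

lemma op_invertible_fromE: "x*y = 1 \<Longrightarrow> y*x = 1 \<Longrightarrow> op_invertible (fromE x)"
  unfolding op_invertible_def by (metis fromE_mult fromE_one)

lemma op_inv_fromE:
  assumes "x*y = 1" "y*x = 1"
  shows "op_inv (fromE x) = fromE y"
proof -
  have "\<exists>S. fromE x o\<^sub>L S = id_blinfun \<and> S o\<^sub>L fromE x = id_blinfun"
    using assms by (metis fromE_mult fromE_one)
  then have S: "fromE x o\<^sub>L op_inv (fromE x) = id_blinfun \<and> op_inv (fromE x) o\<^sub>L fromE x = id_blinfun"
    unfolding op_inv_def by (rule someI_ex)
  define s where "s = toE (op_inv (fromE x))"
  have "fromE (s * x) = fromE 1" using S by (simp add: s_def fromE_mult fromE_one)
  then have sx: "s * x = 1" by (simp add: fromE_inj)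
  have "s = s * (x * y)" using assms by simp
  also have "\<dots> = y" using sx by (simp flip: mult.assoc)
  finally show ?thesis by (metis s_def fromE_toE toE_fromE)
qed




lemma P2:
  fixes l1 l2 l3 :: "'a::real_algebra_1"
  assumes c: "l2*l1 = l1*l2" "l3*l1 = l1*l3" "l3*l2 = l2*l3" and x: "x3 = 1 - x1 - x2"
  shows "(p *\<^sub>R 1 - (x1 *\<^sub>R l1 + x2 *\<^sub>R l2 + x3 *\<^sub>R l3)) * (p^2 *\<^sub>R 1 - p *\<^sub>R (l1+l2+l3 - (x1 *\<^sub>R l1 + x2 *\<^sub>R l2 + x3 *\<^sub>R l3)) + (x1 *\<^sub>R (l2*l3) + x2 *\<^sub>R (l1*l3) + x3 *\<^sub>R (l1*l2)))
   - (p *\<^sub>R (x1 *\<^sub>R (l1*l1) + x2 *\<^sub>R (l2*l2) + x3 *\<^sub>R (l3*l3) - (x1 *\<^sub>R l1 + x2 *\<^sub>R l2 + x3 *\<^sub>R l3)*(x1 *\<^sub>R l1 + x2 *\<^sub>R l2 + x3 *\<^sub>R l3)) + l1*l2*l3 - (x1 *\<^sub>R l1 + x2 *\<^sub>R l2 + x3 *\<^sub>R l3)*(x1 *\<^sub>R (l2*l3) + x2 *\<^sub>R (l1*l3) + x3 *\<^sub>R (l1*l2)))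
   = (p *\<^sub>R 1 - l1) * (p *\<^sub>R 1 - l2) * (p *\<^sub>R 1 - l3)"
proof -
  have c': "l2*(l1*z) = l1*(l2*z)" "l3*(l1*z) = l1*(l3*z)" "l3*(l2*z) = l2*(l3*z)" for z
    using c by (metis mult.assoc)+
  show ?thesis unfolding x
    by (simp add: algebra_simps c c' power2_eq_square scaleR_add_right scaleR_diff_right
        scaleR_add_left scaleR_diff_left)
qed



lemma P1:
  fixes l1 l2 l3 :: "'a::real_algebra_1"
  assumes x: "x3 = 1 - x1 - x2"
  shows "p^2 *\<^sub>R 1 - p *\<^sub>R (l1+l2+l3 - (x1 *\<^sub>R l1 + x2 *\<^sub>R l2 + x3 *\<^sub>R l3)) + (x1 *\<^sub>R (l2*l3) + x2 *\<^sub>R (l1*l3) + x3 *\<^sub>R (l1*l2))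
    = x1 *\<^sub>R ((p *\<^sub>R 1 - l2) * (p *\<^sub>R 1 - l3)) + x2 *\<^sub>R ((p *\<^sub>R 1 - l1) * (p *\<^sub>R 1 - l3)) + x3 *\<^sub>R ((p *\<^sub>R 1 - l1) * (p *\<^sub>R 1 - l2))"
  unfolding x
  by (simp add: algebra_simps power2_eq_square scaleR_add_right scaleR_diff_right
        scaleR_add_left scaleR_diff_left)

theorem mainTheorem6:
  fixes L1 L2 L3 :: "'d::finite sop" and x1 x2 x3 :: real
    and A :: "real \<Rightarrow> 'd sop" and L :: "'d sop"
    and B C Lhat :: "real \<Rightarrow> 'd sop"
  assumes gen: "cpu_generator L1" "cpu_generator L2" "cpu_generator L3"
    and comm: "L1 o\<^sub>L L2 = L2 o\<^sub>L L1" "L1 o\<^sub>L L3 = L3 o\<^sub>L L1" "L2 o\<^sub>L L3 = L3 o\<^sub>L L2"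
    and x: "x1 \<ge> 0" "x2 \<ge> 0" "x3 \<ge> 0" "x1 + x2 + x3 = 1"
    and A_def: "A = (\<lambda>t. x1 *\<^sub>R op_exp (t *\<^sub>R L1) + x2 *\<^sub>R op_exp (t *\<^sub>R L2)
                        + x3 *\<^sub>R op_exp (t *\<^sub>R L3))"
    and L_def: "L = x1 *\<^sub>R L1 + x2 *\<^sub>R L2 + x3 *\<^sub>R L3"
    and B_def: "B = (\<lambda>p. p *\<^sub>R (x1 *\<^sub>R (L1 o\<^sub>L L1) + x2 *\<^sub>R (L2 o\<^sub>L L2) + x3 *\<^sub>R (L3 o\<^sub>L L3)
                              - (L o\<^sub>L L))
                 + (L1 o\<^sub>L L2 o\<^sub>L L3)
                 - (L o\<^sub>L (x1 *\<^sub>R (L2 o\<^sub>L L3) + x2 *\<^sub>R (L1 o\<^sub>L L3) + x3 *\<^sub>R (L1 o\<^sub>L L2))))"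
    and C_def: "C = (\<lambda>p. (p ^ 2) *\<^sub>R id_blinfun - p *\<^sub>R (L1 + L2 + L3 - L)
                 + x1 *\<^sub>R (L2 o\<^sub>L L3) + x2 *\<^sub>R (L1 o\<^sub>L L3) + x3 *\<^sub>R (L1 o\<^sub>L L2))"
    and Lhat_def: "Lhat = (\<lambda>p. L + (B p o\<^sub>L op_inv (C p)))"
  shows "A 0 = id_blinfun \<and>
         (\<exists>p0. \<forall>p > p0. op_invertible (C p) \<and> op_invertible (p *\<^sub>R id_blinfun - Lhat p) \<and>
            ((\<lambda>t. exp (- p * t) *\<^sub>R A t) has_integral op_inv (p *\<^sub>R id_blinfun - Lhat p)) {0..})"
proof -
  define l1 where "l1 = toE L1"
  define l2 where "l2 = toE L2"
  define l3 where "l3 = toE L3"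
  have fl: "fromE l1 = L1" "fromE l2 = L2" "fromE l3 = L3" by (simp_all add: l1_def l2_def l3_def)
  have c12: "l2*l1 = l1*l2" using comm(1) by (simp add: fromE_inj[symmetric] fromE_mult fl)
  have c13: "l3*l1 = l1*l3" using comm(2) by (simp add: fromE_inj[symmetric] fromE_mult fl)
  have c23: "l3*l2 = l2*l3" using comm(3) by (simp add: fromE_inj[symmetric] fromE_mult fl)
  have x3: "x3 = 1 - x1 - x2" using x(4) by simp
  define lL where "lL = x1 *\<^sub>R l1 + x2 *\<^sub>R l2 + x3 *\<^sub>R l3"
  define eE where "eE = x1 *\<^sub>R (l2*l3) + x2 *\<^sub>R (l1*l3) + x3 *\<^sub>R (l1*l2)"
  define W where "W = l1 + l2 + l3 - lL"
  define bE where "bE p = p *\<^sub>R (x1 *\<^sub>R (l1*l1) + x2 *\<^sub>R (l2*l2) + x3 *\<^sub>R (l3*l3) - lL*lL) + l1*l2*l3 - lL*eE" for p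
  define cE where "cE p = p^2 *\<^sub>R 1 - p *\<^sub>R W + eE" for p
  have L_eq: "L = fromE lL" by (simp add: L_def lL_def fromE_add fromE_scaleR fl)
  have B_eq: "B p = fromE (bE p)" for p
    by (simp add: B_def bE_def L_eq fromE_add fromE_diff fromE_scaleR fromE_mult fl eE_def)
  have C_eq: "C p = fromE (cE p)" for p
    by (simp add: C_def cE_def L_eq fromE_add fromE_diff fromE_scaleR fromE_mult fl eE_def W_def fromE_one)
  have A0: "A 0 = id_blinfun"
    by (simp add: A_def op_exp_eq toE_zero fromE_one flip: scaleR_add_left) (simp add: x(4))
  define p0 where "p0 = 1 + norm l1 + norm l2 + norm l3 + norm W + norm eE"
  have "op_invertible (C p) \<and> op_invertible (p *\<^sub>R id_blinfun - Lhat p) \<and>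
            ((\<lambda>t. exp (- p * t) *\<^sub>R A t) has_integral op_inv (p *\<^sub>R id_blinfun - Lhat p)) {0..}"
    if pp: "p > p0" for p
  proof -
    have p1: "p > 1" "p > norm l1" "p > norm l2" "p > norm l3" "p > norm W + norm eE"
      using pp norm_ge_zero[of l1] norm_ge_zero[of l2] norm_ge_zero[of l3] norm_ge_zero[of W]
        norm_ge_zero[of eE] unfolding p0_def by linarith+
    obtain R1 where R1: "((\<lambda>t. exp (- p * t) *\<^sub>R fromE (exp (t *\<^sub>R l1))) has_integral fromE R1) {0..}"
        "(p *\<^sub>R 1 - l1) * R1 = 1" "R1 * (p *\<^sub>R 1 - l1) = 1"
      using laplace[OF p1(2)] by blast
    obtain R2 where R2: "((\<lambda>t. exp (- p * t) *\<^sub>R fromE (exp (t *\<^sub>R l2))) has_integral fromE R2) {0..}"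
        "(p *\<^sub>R 1 - l2) * R2 = 1" "R2 * (p *\<^sub>R 1 - l2) = 1"
      using laplace[OF p1(3)] by blast
    obtain R3 where R3: "((\<lambda>t. exp (- p * t) *\<^sub>R fromE (exp (t *\<^sub>R l3))) has_integral fromE R3) {0..}"
        "(p *\<^sub>R 1 - l3) * R3 = 1" "R3 * (p *\<^sub>R 1 - l3) = 1"
      using laplace[OF p1(4)] by blast
    define X where "X = (1/p) *\<^sub>R W - (1/p^2) *\<^sub>R eE"
    have nX: "norm X < 1"
    proof -
      have "norm X \<le> norm ((1/p) *\<^sub>R W) + norm ((1/p^2) *\<^sub>R eE)"
        unfolding X_def by (rule norm_triangle_ineq4)
      also have "\<dots> = norm W / p + norm eE / p^2" using p1 by simp
      also have "\<dots> \<le> norm W / p + norm eE / p"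
        using p1 by (intro add_left_mono divide_left_mono) (auto simp: power2_eq_square)
      also have "\<dots> = (norm W + norm eE) / p" by (simp add: add_divide_distrib)
      also have "\<dots> < 1" using p1 by simp
      finally show ?thesis .
    qed
    obtain Y where Y: "(1 - X)*Y = 1" "Y*(1-X) = 1" using neumann[OF nX] by blast
    have cX: "cE p = p^2 *\<^sub>R (1 - X)"
      using p1 by (simp add: cE_def X_def scaleR_diff_right power2_eq_square)
    define ci where "ci = (1/p^2) *\<^sub>R Y"
    have ci: "cE p * ci = 1" "ci * cE p = 1" using p1 Y by (simp_all add: cX ci_def)
    define q1 where "q1 = p *\<^sub>R 1 - l1"
    define q2 where "q2 = p *\<^sub>R 1 - l2"
    define q3 where "q3 = p *\<^sub>R 1 - l3"
    have P2': "(p *\<^sub>R 1 - lL) * cE p - bE p = q1 * q2 * q3"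
      unfolding cE_def bE_def W_def eE_def lL_def q1_def q2_def q3_def
      by (rule P2[OF c12 c13 c23 x3])
    have P1': "cE p = x1 *\<^sub>R (q2 * q3) + x2 *\<^sub>R (q1 * q3) + x3 *\<^sub>R (q1 * q2)"
      unfolding cE_def W_def eE_def lL_def q1_def q2_def q3_def
      by (rule P1[OF x3])
    have q12: "q1*q2 = q2*q1" "q1*q3 = q3*q1" "q2*q3 = q3*q2"
      unfolding q1_def q2_def q3_def by (simp_all add: algebra_simps c12 c13 c23)
    have Rq: "R2*q1 = q1*R2" "R3*q1 = q1*R3" "R3*q2 = q2*R3"
      using comm_inv[OF q12(1) R2(2,3)[folded q2_def]]
        comm_inv[OF q12(2) R3(2,3)[folded q3_def]]
        comm_inv[OF q12(3) R3(2,3)[folded q3_def]] by simp_all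
    define D where "D = q1 * q2 * q3"
    define Di where "Di = R3 * R2 * R1"
    have DDi: "D * Di = 1"
    proof -
      have "D * Di = q1 * (q2 * (q3 * R3) * R2) * R1" by (simp add: D_def Di_def mult.assoc)
      also have "\<dots> = 1" using R1(2) R2(2) R3(2) by (simp add: q1_def q2_def q3_def)
      finally show ?thesis .
    qed
    define Ah where "Ah = x1 *\<^sub>R R1 + x2 *\<^sub>R R2 + x3 *\<^sub>R R3"
    have AhD: "Ah * D = cE p"
    proof -
      have a: "R1 * D = q2 * q3" using R1(3) by (simp add: D_def q1_def flip: mult.assoc)
      have b: "R2 * D = q1 * q3"
      proof -
        have "R2 * D = (R2 * q1) * q2 * q3" by (simp add: D_def mult.assoc)
        also have "\<dots> = q1 * (R2 * q2) * q3" by (simp add: Rq(1) mult.assoc)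
        finally have "R2 * D = q1 * (R2 * q2) * q3" .
        then show ?thesis using R2(3) by (simp add: q2_def)
      qed
      have c: "R3 * D = q1 * q2"
      proof -
        have "R3 * D = (R3 * q1) * q2 * q3" by (simp add: D_def mult.assoc)
        also have "\<dots> = q1 * ((R3 * q2) * q3)" by (simp add: Rq(2) mult.assoc)
        also have "\<dots> = q1 * q2 * (R3 * q3)" by (simp add: Rq(3) mult.assoc)
        finally have "R3 * D = q1 * q2 * (R3 * q3)" .
        then show ?thesis using R3(3) by (simp add: q3_def)
      qed
      show ?thesis by (simp add: Ah_def algebra_simps a b c P1')
    qed
    define Z where "Z = p *\<^sub>R 1 - (lL + bE p * ci)"
    have ZD: "Z = D * ci"
    proof -
      have "D * ci = ((p *\<^sub>R 1 - lL) * cE p - bE p) * ci" by (simp add: D_def P2')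
      also have "\<dots> = (p *\<^sub>R 1 - lL) * (cE p * ci) - bE p * ci" by (simp add: algebra_simps)
      also have "\<dots> = Z" by (simp add: ci Z_def)
      finally show ?thesis by simp
    qed
    have AhZ: "Ah * Z = 1" by (simp add: ZD AhD flip: mult.assoc) (simp add: ci)
    have Ah2: "Ah = cE p * Di" by (metis AhD DDi mult.assoc mult.right_neutral)
    have ZAh: "Z * Ah = 1"
    proof -
      have "Z * Ah = D * (ci * cE p) * Di" by (simp add: ZD Ah2 mult.assoc)
      then show ?thesis by (simp add: ci DDi)
    qed
    have Lh: "p *\<^sub>R id_blinfun - Lhat p = fromE Z"
      by (simp add: Lhat_def Z_def B_eq C_eq L_eq op_inv_fromE[OF ci] fromE_diff fromE_add fromE_mult fromE_scaleR fromE_one)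
    have inv1: "op_invertible (C p)" unfolding C_eq by (rule op_invertible_fromE[OF ci])
    have inv2: "op_invertible (p *\<^sub>R id_blinfun - Lhat p)" unfolding Lh by (rule op_invertible_fromE[OF ZAh AhZ])
    have oi: "op_inv (p *\<^sub>R id_blinfun - Lhat p) = fromE Ah" unfolding Lh by (rule op_inv_fromE[OF ZAh AhZ])
    have opx: "op_exp (t *\<^sub>R Lj) = fromE (exp (t *\<^sub>R toE Lj))" for t Lj
      by (simp add: op_exp_eq toE_scaleR[of t "toE Lj", simplified])
    have integrand: "(\<lambda>t. exp (- p * t) *\<^sub>R A t) = (\<lambda>t. x1 *\<^sub>R (exp (- p * t) *\<^sub>R fromE (exp (t *\<^sub>R l1)))
        + x2 *\<^sub>R (exp (- p * t) *\<^sub>R fromE (exp (t *\<^sub>R l2))) + x3 *\<^sub>R (exp (- p * t) *\<^sub>R fromE (exp (t *\<^sub>R l3))))"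
      by (simp add: A_def opx l1_def l2_def l3_def scaleR_add_right mult.commute)
    have "((\<lambda>t. exp (- p * t) *\<^sub>R A t) has_integral (x1 *\<^sub>R fromE R1 + x2 *\<^sub>R fromE R2 + x3 *\<^sub>R fromE R3)) {0..}"
      unfolding integrand by (intro has_integral_add has_integral_cmul R1(1) R2(1) R3(1))
    moreover have "x1 *\<^sub>R fromE R1 + x2 *\<^sub>R fromE R2 + x3 *\<^sub>R fromE R3 = fromE Ah"
      by (simp add: Ah_def fromE_add fromE_scaleR)
    ultimately show ?thesis using inv1 inv2 oi by simp
  qed
  then show ?thesis using A0 by blast
qed


end
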